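(* For every $(\beta,\delta)\in[0,\infty)^2$, the limit $$f(\beta,\delta):=\lim_{L\to\infty}\frac1L\log Z_{L,\beta,\delta}$$ exists, belongs to $[0,\infty)$, and satisfies $f(\beta,\delta)=\max\{f(\beta,0),\delta\}$.
   Context: Interacting partially-directed self-avoiding walk (IPDSAW) with an attractive vertical wall. Fix $\beta\ge0,\ \delta\ge0$. For $L\in\mathbb N$ and $1\le N\le L$ let $\mathcal L_{N,L}=\{\ell=(\ell_1,\dots,\ell_N)\in\mathbb Z^N:\sum_{n=1}^N|\ell_n|+N=L\}$ and $\Omega_L=\bigcup_{N=1}^L\mathcal L_{N,L}$. For $\ell\in\mathcal L_{N,L}$ the Hamiltonian is $H_{L,\beta,\delta}(\ell)=\delta|\ell_1|+\beta\sum_{n=1}^{N-1}\ell_n\,\tilde\wedge\,\ell_{n+1}$, where $x\,\tilde\wedge\,y=\min(|x|,|y|)$ if $xy<0$ and $0$ otherwise. The partition function is $Z_{L,\beta,\delta}=\sum_{\ell\in\Omega_L}e^{H_{L,\beta,\delta}(\ell)}$. The limit $f(\beta,0)=\lim_{L\to\infty}\frac1L\log Z_{L,\beta,0}$ (wall interaction switched off) is known to exist. *)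

theory Defs
  imports Complex_Main
begin

text \<open>Configurations: a configuration with N stretches is a list l of integers of
length N; l ! 0 is the first stretch (the one interacting with the wall).\<close>

definition tilde_wedge :: "int \<Rightarrow> int \<Rightarrow> int" where
  "tilde_wedge x y = (if x * y < 0 then min \<bar>x\<bar> \<bar>y\<bar> else 0)"

definition LNL :: "nat \<Rightarrow> nat \<Rightarrow> int list set" where
  "LNL N L = {l. length l = N \<and> (\<Sum>n<N. \<bar>l ! n\<bar>) + int N = int L}"

definition Omega :: "nat \<Rightarrow> int list set" where
  "Omega L = (\<Union>N\<in>{1..L}. LNL N L)"

definition hamiltonian :: "real \<Rightarrow> real \<Rightarrow> int list \<Rightarrow> real" where
  "hamiltonian \<beta> \<delta> l =
     \<delta> * of_int \<bar>l ! 0\<bar> +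
     \<beta> * (\<Sum>n<length l - 1. of_int (tilde_wedge (l ! n) (l ! (n + 1))))"

definition partition_fn :: "nat \<Rightarrow> real \<Rightarrow> real \<Rightarrow> real" where
  "partition_fn L \<beta> \<delta> = (\<Sum>l\<in>Omega L. exp (hamiltonian \<beta> \<delta> l))"

end

theory Submission
  imports Defs "HOL-Analysis.Convex"
begin


definition wt :: "int list \<Rightarrow> int" where
  "wt l = sum_list (map (\<lambda>x. \<bar>x\<bar> + 1) l)"

fun iw :: "int list \<Rightarrow> int" where
  "iw [] = 0"
| "iw [x] = 0"
| "iw (x # y # r) = tilde_wedge x y + iw (y # r)"

lemma wt_Nil[simp]: "wt [] = 0" by (simp add: wt_def)
lemma wt_Cons[simp]: "wt (x # l) = \<bar>x\<bar> + 1 + wt l" by (simp add: wt_def)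
lemma wt_append[simp]: "wt (a @ b) = wt a + wt b" by (simp add: wt_def)
lemma wt_ge_length: "int (length l) \<le> wt l" by (induction l) auto
lemma wt_nonneg: "0 \<le> wt l" using wt_ge_length[of l] by linarith
lemma wt_elem: "x \<in> set l \<Longrightarrow> \<bar>x\<bar> < wt l"
  by (induction l) (auto simp: wt_nonneg less_le_trans add.commute add_strict_increasing)

lemma tw_nonneg: "0 \<le> tilde_wedge x y" by (simp add: tilde_wedge_def)
lemma tw_le: "tilde_wedge x y \<le> \<bar>y\<bar>" by (simp add: tilde_wedge_def)

lemma iw_nonneg: "0 \<le> iw l"
  by (induction l rule: iw.induct) (auto simp: tw_nonneg)

lemma iw_sum: "(\<Sum>n<length l - 1. tilde_wedge (l ! n) (l ! (n + 1))) = iw l"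
proof (induction l rule: iw.induct)
  case (3 x y r)
  have "(\<Sum>n<length (x # y # r) - 1. tilde_wedge ((x # y # r) ! n) ((x # y # r) ! (n + 1)))
      = (\<Sum>n<Suc (length (y # r) - 1). tilde_wedge ((x # y # r) ! n) ((x # y # r) ! (n + 1)))"
    by simp
  also have "\<dots> = tilde_wedge x y + (\<Sum>n<length (y # r) - 1. tilde_wedge ((y # r) ! n) ((y # r) ! (n + 1)))"
    by (subst sum.lessThan_Suc_shift) simp
  finally show ?case using 3 by simp
qed auto

lemma ham_eq: "hamiltonian \<beta> \<delta> l = \<delta> * \<bar>l ! 0\<bar> + \<beta> * iw l"
proof -
  have "(\<Sum>n<length l - 1. real_of_int (tilde_wedge (l ! n) (l ! (n + 1)))) = real_of_int (iw l)"
    using iw_sum[of l] by (metis of_int_sum)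
  then show ?thesis by (simp add: hamiltonian_def)
qed

lemma iw_append: "iw a + iw b \<le> iw (a @ b)"
proof (induction a rule: iw.induct)
  case 1 then show ?case by simp
next
  case (2 x)
  then show ?case by (cases b) (auto simp: tw_nonneg)
next
  case (3 x y r) then show ?case by simp
qed

lemma Omega_eq: "Omega L = {l. l \<noteq> [] \<and> wt l = int L}"
proof -
  have s: "(\<Sum>n<length l. \<bar>l ! n\<bar>) + int (length l) = wt l" for l :: "int list"
  proof -
    have "(\<Sum>n<length l. \<bar>l ! n\<bar>) = sum_list (map abs l)"
      by (simp add: sum_list_sum_nth atLeast0LessThan)
    moreover have "wt l = sum_list (map abs l) + int (length l)"
      by (induction l) auto
    ultimately show ?thesis by simp
  qed
  show ?thesis
  proof (rule set_eqI, rule iffI)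
    fix l assume "l \<in> Omega L"
    then obtain N where "N \<in> {1..L}" "l \<in> LNL N L" by (auto simp: Omega_def)
    then show "l \<in> {l. l \<noteq> [] \<and> wt l = int L}" using s[of l] by (auto simp: LNL_def)
  next
    fix l assume h: "l \<in> {l. l \<noteq> [] \<and> wt l = int L}"
    have "length l \<ge> 1" using h by (cases l) auto
    moreover have "int (length l) \<le> int L" using wt_ge_length[of l] h by auto
    ultimately have "length l \<in> {1..L}" by simp
    moreover have "l \<in> LNL (length l) L" using h s[of l] by (simp add: LNL_def)
    ultimately show "l \<in> Omega L" unfolding Omega_def by blast
  qed
qed

lemma finite_Omega: "finite (Omega L)"
proof -
  have "Omega L \<subseteq> {xs. set xs \<subseteq> {- int L..int L} \<and> length xs \<le> L}"
  proof
    fix l assume "l \<in> Omega L"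
    then have w: "wt l = int L" by (simp add: Omega_eq)
    have "set l \<subseteq> {- int L..int L}"
    proof
      fix x assume "x \<in> set l"
      then have "\<bar>x\<bar> < int L" using wt_elem[of x l] w by simp
      then show "x \<in> {- int L..int L}" by auto
    qed
    moreover have "length l \<le> L" using wt_ge_length[of l] w by simp
    ultimately show "l \<in> {xs. set xs \<subseteq> {- int L..int L} \<and> length xs \<le> L}" by simp
  qed
  then show ?thesis by (rule finite_subset) (auto intro: finite_lists_length_le)
qed



lemma Zdef: fixes \<beta> \<delta> :: real shows "partition_fn L \<beta> \<delta> = (\<Sum>l\<in>Omega L. exp (\<delta> * \<bar>l ! 0\<bar> + \<beta> * iw l))"
  by (simp add: partition_fn_def ham_eq)

lemma single_in: "L \<ge> 1 \<Longrightarrow> [int L - 1] \<in> Omega L"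
  by (simp add: Omega_eq)

lemma Z_ge_single:
  assumes "L \<ge> 1"
  shows "exp (\<delta> * (real L - 1)) \<le> partition_fn L \<beta> \<delta>"
proof -
  have "exp (\<delta> * \<bar>[int L - 1] ! 0\<bar> + \<beta> * iw [int L - 1]) \<le> partition_fn L \<beta> \<delta>"
    unfolding Zdef by (rule member_le_sum) (use single_in[OF assms] finite_Omega in auto)
  moreover have "real_of_int \<bar>int L - 1\<bar> = real L - 1" using assms by simp
  ultimately show ?thesis by simp
qed

lemma Z_pos: "L \<ge> 1 \<Longrightarrow> 0 < partition_fn L \<beta> \<delta>"
  using Z_ge_single[of L \<delta> \<beta>] by (meson exp_gt_zero less_le_trans)

lemma Z_ge1: "L \<ge> 1 \<Longrightarrow> \<delta> \<ge> 0 \<Longrightarrow> 1 \<le> partition_fn L \<beta> \<delta>"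
  using Z_ge_single[of L \<delta> \<beta>] by (smt (verit) of_nat_1 of_nat_mono one_le_exp_iff zero_le_mult_iff)

lemma Z_mono: "\<delta>1 \<le> \<delta>2 \<Longrightarrow> partition_fn L \<beta> \<delta>1 \<le> partition_fn L \<beta> \<delta>2"
  unfolding Zdef by (rule sum_mono) (simp add: mult_right_mono)

lemma append_inj:
  assumes "a @ b = c @ d" "wt a = wt c"
  shows "a = c \<and> b = d"
proof -
  from assms(1) obtain us where "a = c @ us \<and> us @ b = d \<or> a @ us = c \<and> b = us @ d"
    by (auto simp: append_eq_append_conv2)
  then have "us = []" using assms(2) wt_ge_length[of us] by (auto)
  then show ?thesis using \<open>a = c @ us \<and> us @ b = d \<or> a @ us = c \<and> b = us @ d\<close> by auto
qed

lemma Z_super: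
  assumes "\<beta> \<ge> 0"
  shows "partition_fn L1 \<beta> 0 * partition_fn L2 \<beta> 0 \<le> partition_fn (L1 + L2) \<beta> 0"
proof -
  let ?A = "Omega L1 \<times> Omega L2"
  let ?g = "\<lambda>l. exp (\<beta> * iw l)"
  let ?c = "\<lambda>(a, b). a @ b :: int list"
  have "partition_fn L1 \<beta> 0 * partition_fn L2 \<beta> 0 = (\<Sum>p\<in>?A. ?g (fst p) * ?g (snd p))"
    unfolding Zdef by (simp add: sum_product sum.cartesian_product case_prod_beta)
  also have "\<dots> \<le> (\<Sum>p\<in>?A. ?g (?c p))"
  proof (rule sum_mono)
    fix p assume "p \<in> ?A"
    have "\<beta> * iw (fst p) + \<beta> * iw (snd p) \<le> \<beta> * iw (fst p @ snd p)"
      using iw_append[of "fst p" "snd p"] assms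
      by (metis distrib_left mult_left_mono of_int_add of_int_le_iff)
    then show "?g (fst p) * ?g (snd p) \<le> ?g (?c p)"
      by (simp add: case_prod_beta flip: exp_add)
  qed
  also have "\<dots> = (\<Sum>l\<in>?c ` ?A. ?g l)"
  proof (rule sum.reindex[symmetric, unfolded comp_def])
    show "inj_on ?c ?A"
    proof (rule inj_onI)
      fix p q assume "p \<in> ?A" "q \<in> ?A" "?c p = ?c q"
      then show "p = q" using append_inj[of "fst p" "snd p" "fst q" "snd q"]
        by (auto simp: Omega_eq case_prod_beta prod_eq_iff)
    qed
  qed
  also have "\<dots> \<le> (\<Sum>l\<in>Omega (L1 + L2). ?g l)"
  proof (rule sum_mono2[OF finite_Omega])
    show "?c ` ?A \<subseteq> Omega (L1 + L2)" by (auto simp: Omega_eq)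
  qed auto
  finally show ?thesis unfolding Zdef by simp
qed

fun alt :: "int \<Rightarrow> nat \<Rightarrow> int list" where
  "alt k 0 = []"
| "alt k (Suc n) = k # alt (- k) n"

lemma alt_wt: "wt (alt k n) = int n * (\<bar>k\<bar> + 1)"
  by (induction n arbitrary: k) (auto simp: algebra_simps)

lemma alt_iw: "iw (alt k (Suc n)) = int n * \<bar>k\<bar>"
proof (induction n arbitrary: k)
  case (Suc n)
  have "tilde_wedge k (- k) = \<bar>k\<bar>"
    by (cases "k = 0") (auto simp: tilde_wedge_def mult_less_0_iff zero_less_mult_iff)
  then show ?case using Suc[of "-k"] by (simp add: algebra_simps)
qed simp

lemma Z_alt:
  assumes "\<beta> \<ge> 0" "N \<ge> 1"
  shows "exp (\<beta> * (real N - 1) * real k) \<le> partition_fn (N * (k + 1)) \<beta> 0"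
proof -
  obtain n where n: "N = Suc n" using assms(2) by (cases N) auto
  have "wt (alt (int k) N) = int (N * (k + 1))" by (simp only: alt_wt) (simp add: algebra_simps)
  then have mem: "alt (int k) N \<in> Omega (N * (k + 1))"
    using n by (simp add: Omega_eq)
  have "exp ((0::real) * \<bar>alt (int k) N ! 0\<bar> + \<beta> * iw (alt (int k) N)) \<le> partition_fn (N * (k + 1)) \<beta> 0"
    unfolding Zdef by (rule member_le_sum) (use mem finite_Omega in auto)
  then show ?thesis using alt_iw[of "int k" n] n by (simp add: algebra_simps)
qed



lemma Z_decomp:
  fixes \<beta> \<delta> :: real
  assumes "\<beta> \<ge> 0" "L \<ge> 1"
  shows "partition_fn L \<beta> \<delta> \<le> (\<Sum>x\<in>{-(int L - 1)..int L - 1}. exp (\<delta> * \<bar>x\<bar>) *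
           (if \<bar>x\<bar> = int L - 1 then 1 else partition_fn (nat (int L - 1 - \<bar>x\<bar>)) \<beta> \<beta>))"
proof -
  define X where "X = {-(int L - 1)..int L - 1}"
  define R where "R x = (if \<bar>x\<bar> = int L - 1 then {[]} else Omega (nat (int L - 1 - \<bar>x\<bar>)))" for x :: int
  define g where "g p = exp (\<delta> * \<bar>fst p\<bar>) * (if snd p = [] then 1 else exp (\<beta> * \<bar>snd p ! 0\<bar> + \<beta> * iw (snd p)))"
    for p :: "int \<times> int list"
  have finX: "finite X" by (simp add: X_def)
  have finR: "finite (R x)" for x by (simp add: R_def finite_Omega)
  have "partition_fn L \<beta> \<delta> \<le> sum g (Sigma X R)"
    unfolding Zdef
  proof (rule sum_le_included[where i = "\<lambda>p. fst p # snd p"])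
    show "finite (Omega L)" by (rule finite_Omega)
    show "finite (Sigma X R)" using finX finR by auto
    show "\<forall>y\<in>Sigma X R. 0 \<le> g y" by (simp add: g_def)
    show "\<forall>l\<in>Omega L. \<exists>y\<in>Sigma X R. fst y # snd y = l \<and> exp (\<delta> * \<bar>l ! 0\<bar> + \<beta> * iw l) \<le> g y"
    proof
      fix l assume l: "l \<in> Omega L"
      then obtain x r where lx: "l = x # r" by (cases l) (auto simp: Omega_eq)
      have w: "\<bar>x\<bar> + 1 + wt r = int L" using l lx by (simp add: Omega_eq)
      show "\<exists>y\<in>Sigma X R. fst y # snd y = l \<and> exp (\<delta> * \<bar>l ! 0\<bar> + \<beta> * iw l) \<le> g y"
      proof (cases r)
        case Nil
        then have "\<bar>x\<bar> = int L - 1" using w by simp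
        then have "(x, r) \<in> Sigma X R" using Nil by (auto simp: X_def R_def)
        moreover have "exp (\<delta> * \<bar>l ! 0\<bar> + \<beta> * iw l) \<le> g (x, r)"
          using Nil lx by (simp add: g_def)
        ultimately show ?thesis using lx by force
      next
        case (Cons y r')
        have "wt r \<ge> \<bar>y\<bar> + 1" using Cons wt_nonneg[of r'] by simp
        then have "\<bar>x\<bar> \<noteq> int L - 1" "\<bar>x\<bar> \<le> int L - 1" using w by auto
        then have "(x, r) \<in> Sigma X R" using Cons w
          by (auto simp: X_def R_def Omega_eq)
        moreover have "exp (\<delta> * \<bar>l ! 0\<bar> + \<beta> * iw l) \<le> g (x, r)"
        proof -
          have "\<beta> * tilde_wedge x y \<le> \<beta> * \<bar>y\<bar>"
            using tw_le[of x y] assms(1) by (simp add: mult_left_mono)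
          then have "\<delta> * \<bar>x\<bar> + \<beta> * iw l \<le> \<delta> * \<bar>x\<bar> + (\<beta> * \<bar>y\<bar> + \<beta> * iw r)"
            using lx Cons by (simp add: distrib_left)
          then show ?thesis using lx Cons by (simp add: g_def flip: exp_add)
        qed
        ultimately show ?thesis using lx by force
      qed
    qed
  qed
  also have "sum g (Sigma X R) = (\<Sum>x\<in>X. \<Sum>r\<in>R x. g (x, r))"
    using sum.Sigma[OF finX, of R "\<lambda>x r. g (x, r)"] finR by simp
  also have "\<dots> = (\<Sum>x\<in>X. exp (\<delta> * \<bar>x\<bar>) *
           (if \<bar>x\<bar> = int L - 1 then 1 else partition_fn (nat (int L - 1 - \<bar>x\<bar>)) \<beta> \<beta>))"
  proof (rule sum.cong[OF refl])
    fix x assume "x \<in> X"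
    show "(\<Sum>r\<in>R x. g (x, r)) = exp (\<delta> * \<bar>x\<bar>) *
           (if \<bar>x\<bar> = int L - 1 then 1 else partition_fn (nat (int L - 1 - \<bar>x\<bar>)) \<beta> \<beta>)"
    proof (cases "\<bar>x\<bar> = int L - 1")
      case True then show ?thesis by (simp add: R_def g_def)
    next
      case False
      have "(\<Sum>r\<in>R x. g (x, r)) = (\<Sum>r\<in>Omega (nat (int L - 1 - \<bar>x\<bar>)). exp (\<delta> * \<bar>x\<bar>) *
              exp (\<beta> * \<bar>r ! 0\<bar> + \<beta> * iw r))"
        using False by (intro sum.cong) (auto simp: R_def g_def Omega_eq)
      also have "\<dots> = exp (\<delta> * \<bar>x\<bar>) * partition_fn (nat (int L - 1 - \<bar>x\<bar>)) \<beta> \<beta>"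
        by (simp add: Zdef sum_distrib_left)
      finally show ?thesis using False by simp
    qed
  qed
  finally show ?thesis by (simp add: X_def)
qed

lemma geo: "(\<Sum>x\<in>{-int M..int M}. (1/4::real) ^ nat \<bar>x\<bar>) \<le> 3 - 2 * (1/4) ^ M"
proof (induction M)
  case 0 then show ?case by simp
next
  case (Suc M)
  have e: "{-int (Suc M)..int (Suc M)} = insert (int M + 1) (insert (-(int M + 1)) {-int M..int M})"
    by auto
  have "(\<Sum>x\<in>{-int (Suc M)..int (Suc M)}. (1/4::real) ^ nat \<bar>x\<bar>)
      = (1/4) ^ Suc M + (1/4) ^ Suc M + (\<Sum>x\<in>{-int M..int M}. (1/4::real) ^ nat \<bar>x\<bar>)"
    unfolding e by (simp add: nat_add_distrib)
  also have "\<dots> \<le> 3 - 2 * (1/4) ^ Suc M"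
  proof -
    have h: "(0::real) \<le> (1/4) ^ M" by simp
    show ?thesis using Suc.IH h by (simp only: power_Suc; linarith)
  qed
  finally show ?case .
qed

lemma geo3: "(\<Sum>x\<in>{-int M..int M}. (1/4::real) ^ nat \<bar>x\<bar>) \<le> 3"
proof -
  have "(0::real) \<le> (1/4) ^ M" by simp
  then show ?thesis using geo[of M] by linarith
qed

lemma crude:
  fixes \<beta> :: real
  assumes "\<beta> \<ge> 0" "L \<ge> 1"
  shows "partition_fn L \<beta> \<beta> \<le> (4 * exp \<beta>) ^ L"
  using assms(2)
proof (induction L rule: less_induct)
  case (less L)
  define K where "K = 4 * exp \<beta>"
  have K4: "K \<ge> 4" using assms(1) by (simp add: K_def)
  obtain M where M: "L = Suc M" using less.prems by (cases L) auto
  have X: "{-(int L - 1)..int L - 1} = {-int M..int M}" using M by simp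
  have tm: "exp (\<beta> * \<bar>x\<bar>) * (if \<bar>x\<bar> = int L - 1 then 1 else partition_fn (nat (int L - 1 - \<bar>x\<bar>)) \<beta> \<beta>)
      \<le> K ^ M * (1/4) ^ nat \<bar>x\<bar>" if x: "x \<in> {-int M..int M}" for x
  proof -
    define j where "j = nat \<bar>x\<bar>"
    have jM: "j \<le> M" using x by (auto simp: j_def)
    have ej: "exp (\<beta> * \<bar>x\<bar>) = exp \<beta> ^ j"
      by (simp add: j_def exp_of_nat_mult[symmetric] mult.commute)
    have KM: "K ^ M * (1/4) ^ j = exp \<beta> ^ j * K ^ (M - j)"
    proof -
      have "K ^ M = K ^ j * K ^ (M - j)" using jM by (simp flip: power_add)
      moreover have "K ^ j * (1/4) ^ j = exp \<beta> ^ j"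
      proof -
        have "K * (1/4) = exp \<beta>" by (simp add: K_def)
        then show ?thesis by (metis power_mult_distrib)
      qed
      ultimately show ?thesis by (simp add: algebra_simps)
    qed
    show ?thesis
    proof (cases "\<bar>x\<bar> = int L - 1")
      case True
      then have jm: "j = M" using M by (simp add: j_def)
      then have "nat \<bar>x\<bar> = M" by (simp add: j_def)
      then show ?thesis using True ej KM jm by simp
    next
      case False
      define n where "n = nat (int L - 1 - \<bar>x\<bar>)"
      have n: "n = M - j" "n \<ge> 1" "n < L" using False x M by (auto simp: n_def j_def)
      have "partition_fn n \<beta> \<beta> \<le> K ^ n" using less.IH[OF n(3) n(2)] by (simp add: K_def)
      then have "exp (\<beta> * \<bar>x\<bar>) * partition_fn n \<beta> \<beta> \<le> exp \<beta> ^ j * K ^ (M - j)"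
        using ej n(1) by (simp add: mult_left_mono)
      then show ?thesis using False KM by (simp add: n_def j_def)
    qed
  qed
  have "partition_fn L \<beta> \<beta> \<le> (\<Sum>x\<in>{-(int L - 1)..int L - 1}. exp (\<beta> * \<bar>x\<bar>) *
           (if \<bar>x\<bar> = int L - 1 then 1 else partition_fn (nat (int L - 1 - \<bar>x\<bar>)) \<beta> \<beta>))"
    by (rule Z_decomp[OF assms(1) less.prems])
  also have "\<dots> \<le> (\<Sum>x\<in>{-int M..int M}. K ^ M * (1/4) ^ nat \<bar>x\<bar>)"
    unfolding X by (rule sum_mono[OF tm])
  also have "\<dots> = K ^ M * (\<Sum>x\<in>{-int M..int M}. (1/4::real) ^ nat \<bar>x\<bar>)"
    by (simp add: sum_distrib_left)
  also have "\<dots> \<le> K ^ M * 3"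
    using geo3[of M] K4 by (intro mult_left_mono) auto
  also have "\<dots> \<le> K ^ M * K" using K4 by (intro mult_left_mono) auto
  finally show ?case by (simp add: M K_def mult.commute)
qed



lemma DB:
  fixes \<beta> \<delta> C r :: real
  assumes "\<beta> \<ge> 0" "\<delta> \<ge> 0" "C > 0"
    and bnd: "\<And>n. n \<ge> 1 \<Longrightarrow> partition_fn n \<beta> \<beta> \<le> C * exp (r * n)"
    and L: "L \<ge> 1"
  shows "partition_fn L \<beta> \<delta> \<le> 2 * real L * max 1 C * exp (max \<delta> r * L)"
proof -
  define m where "m = max \<delta> r"
  define B where "B = max 1 C * exp (m * L)"
  have m0: "m \<ge> 0" "\<delta> \<le> m" "r \<le> m" using assms by (auto simp: m_def)
  have tm: "exp (\<delta> * \<bar>x\<bar>) * (if \<bar>x\<bar> = int L - 1 then 1 else partition_fn (nat (int L - 1 - \<bar>x\<bar>)) \<beta> \<beta>) \<le> B"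
    if x: "x \<in> {-(int L - 1)..int L - 1}" for x
  proof (cases "\<bar>x\<bar> = int L - 1")
    case True
    have "\<delta> * \<bar>x\<bar> \<le> m * L"
    proof -
      have "real_of_int \<bar>x\<bar> \<le> real L" using True by simp
      then have "\<delta> * \<bar>x\<bar> \<le> m * \<bar>x\<bar>" "m * \<bar>x\<bar> \<le> m * L"
        using m0 by (auto intro: mult_right_mono mult_left_mono)
      then show ?thesis by linarith
    qed
    then have "exp (\<delta> * \<bar>x\<bar>) \<le> exp (m * L)" by simp
    also have "\<dots> \<le> B" unfolding B_def by (simp add: mult_le_cancel_right1)
    finally show ?thesis using True by simp
  next
    case False
    define n where "n = nat (int L - 1 - \<bar>x\<bar>)"
    have n1: "n \<ge> 1" using False x by (auto simp: n_def)
    have rn: "real n = real L - 1 - \<bar>x\<bar>" using False x by (auto simp: n_def)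
    have "\<delta> * \<bar>x\<bar> + r * n \<le> m * \<bar>x\<bar> + m * n"
      using m0 by (intro add_mono mult_right_mono) auto
    also have "\<dots> = m * (real L - 1)" unfolding rn by (simp add: algebra_simps)
    also have "\<dots> \<le> m * L" using m0 by (simp add: algebra_simps)
    finally have e: "\<delta> * \<bar>x\<bar> + r * n \<le> m * L" .
    have "exp (\<delta> * \<bar>x\<bar>) * partition_fn n \<beta> \<beta> \<le> exp (\<delta> * \<bar>x\<bar>) * (C * exp (r * n))"
      using bnd[OF n1] by (simp add: mult_left_mono)
    also have "\<dots> = C * exp (\<delta> * \<bar>x\<bar> + r * n)" by (simp add: exp_add)
    also have "\<dots> \<le> C * exp (m * L)" using e assms(3) by simp
    also have "\<dots> \<le> B" unfolding B_def by (simp add: mult_right_mono)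
    finally show ?thesis using False by (simp add: n_def)
  qed
  have "partition_fn L \<beta> \<delta> \<le> (\<Sum>x\<in>{-(int L - 1)..int L - 1}. exp (\<delta> * \<bar>x\<bar>) *
           (if \<bar>x\<bar> = int L - 1 then 1 else partition_fn (nat (int L - 1 - \<bar>x\<bar>)) \<beta> \<beta>))"
    by (rule Z_decomp[OF assms(1) L])
  also have "\<dots> \<le> real (card {-(int L - 1)..int L - 1}) * B"
    by (rule sum_bounded_above[OF tm])
  also have "\<dots> \<le> 2 * real L * B"
  proof -
    have "real (card {-(int L - 1)..int L - 1}) \<le> 2 * real L" using L by simp
    moreover have "B \<ge> 0" by (simp add: B_def)
    ultimately show ?thesis by (simp add: mult_right_mono)
  qed
  finally show ?thesis by (simp add: B_def m_def mult.assoc)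
qed

lemma holder_sum:
  fixes a b :: "'i \<Rightarrow> real"
  assumes "finite A" "\<And>i. i \<in> A \<Longrightarrow> 0 < a i" "\<And>i. i \<in> A \<Longrightarrow> 0 < b i" "0 \<le> t" "t \<le> 1"
  shows "(\<Sum>i\<in>A. a i powr t * b i powr (1 - t)) \<le> (sum a A) powr t * (sum b A) powr (1 - t)"
proof (cases "A = {}")
  case True then show ?thesis by simp
next
  case False
  define SA where "SA = sum a A"
  define SB where "SB = sum b A"
  have SA: "SA > 0" unfolding SA_def using assms False by (intro sum_pos) auto
  have SB: "SB > 0" unfolding SB_def using assms False by (intro sum_pos) auto
  define P where "P = SA powr t * SB powr (1 - t)"
  have "a i powr t * b i powr (1 - t) \<le> (t / SA * P) * a i + ((1 - t) / SB * P) * b i" if i: "i \<in> A" for i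
  proof -
    have ai: "a i > 0" "b i > 0" using assms i by auto
    have "a i powr t * b i powr (1 - t) = ((a i / SA) powr t * (b i / SB) powr (1 - t)) * P"
      using SA SB ai by (simp add: P_def powr_divide)
    also have "\<dots> \<le> (t * (a i / SA) + (1 - t) * (b i / SB)) * P"
      using Youngs_inequality_0[of t "1 - t" "a i / SA" "b i / SB"] assms SA SB ai
      by (intro mult_right_mono) (auto simp: P_def)
    also have "\<dots> = (t / SA * P) * a i + ((1 - t) / SB * P) * b i" by (simp add: algebra_simps)
    finally show ?thesis .
  qed
  then have "(\<Sum>i\<in>A. a i powr t * b i powr (1 - t)) \<le> (\<Sum>i\<in>A. (t / SA * P) * a i + ((1 - t) / SB * P) * b i)"
    by (rule sum_mono)
  also have "\<dots> = (t / SA * P) * sum a A + ((1 - t) / SB * P) * sum b A"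
    by (simp add: sum.distrib sum_distrib_left)
  also have "\<dots> = P" using SA SB unfolding SA_def SB_def by (simp add: field_simps)
  finally show ?thesis by (simp add: P_def SA_def SB_def)
qed

lemma Z_holder:
  fixes \<beta> c t :: real
  assumes "0 \<le> t" "t \<le> 1"
  shows "partition_fn L \<beta> (t * c) \<le> partition_fn L \<beta> c powr t * partition_fn L \<beta> 0 powr (1 - t)"
proof -
  have "partition_fn L \<beta> (t * c) = (\<Sum>l\<in>Omega L. exp (c * real_of_int \<bar>l ! 0\<bar> + \<beta> * real_of_int (iw l)) powr t * exp (0 * real_of_int \<bar>l ! 0\<bar> + \<beta> * real_of_int (iw l)) powr (1 - t))"
    unfolding Zdef
  proof (rule sum.cong[OF refl])
    fix l :: "int list"
    show "exp (t * c * real_of_int \<bar>l ! 0\<bar> + \<beta> * real_of_int (iw l)) = exp (c * real_of_int \<bar>l ! 0\<bar> + \<beta> * real_of_int (iw l)) powr t * exp (0 * real_of_int \<bar>l ! 0\<bar> + \<beta> * real_of_int (iw l)) powr (1 - t)"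
      by (simp add: exp_powr_real flip: exp_add) (simp add: algebra_simps)
  qed
  also have "\<dots> \<le> (\<Sum>l\<in>Omega L. exp (c * real_of_int \<bar>l ! 0\<bar> + \<beta> * real_of_int (iw l))) powr t * (\<Sum>l\<in>Omega L. exp (0 * real_of_int \<bar>l ! 0\<bar> + \<beta> * real_of_int (iw l))) powr (1 - t)"
    by (rule holder_sum[OF finite_Omega _ _ assms]) auto
  also have "\<dots> = partition_fn L \<beta> c powr t * partition_fn L \<beta> 0 powr (1 - t)"
    by (simp add: Zdef)
  finally show ?thesis .
qed



lemma fekete:
  fixes a :: "nat \<Rightarrow> real" and c :: real
  assumes pos: "\<And>n. n \<ge> 1 \<Longrightarrow> 0 \<le> a n"
    and sup: "\<And>n m. n \<ge> 1 \<Longrightarrow> m \<ge> 1 \<Longrightarrow> a n + a m \<le> a (n + m)"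
    and bd: "\<And>n. n \<ge> 1 \<Longrightarrow> a n \<le> c * real n"
  shows "(\<lambda>n. a n / n) \<longlonglongrightarrow> (SUP n\<in>{1..}. a n / n)"
    and "\<And>n. n \<ge> 1 \<Longrightarrow> a n / n \<le> (SUP n\<in>{1..}. a n / n)"
proof -
  define S where "S = (SUP n\<in>{1..}. a n / n)"
  have bdd: "bdd_above ((\<lambda>n. a n / n) ` {1..})"
  proof (rule bdd_aboveI2)
    fix n :: nat assume "n \<in> {1..}"
    then show "a n / n \<le> c" using bd[of n] by (simp add: divide_le_eq mult.commute)
  qed
  have up: "a n / n \<le> S" if "n \<ge> 1" for n
    unfolding S_def by (rule cSUP_upper[OF _ bdd]) (use that in auto)
  then show "\<And>n. n \<ge> 1 \<Longrightarrow> a n / n \<le> (SUP n\<in>{1..}. a n / n)" by (simp add: S_def)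
  have S0: "S \<ge> 0" using up[of 1] pos[of 1] by simp
  have mult: "real q * a m + a s \<le> a (q * m + s)" if "m \<ge> 1" "s \<ge> 1" for q m s
  proof (induction q)
    case 0 then show ?case by simp
  next
    case (Suc q)
    have "a m + a (q * m + s) \<le> a (m + (q * m + s))" using sup that by simp
    then show ?case using Suc by (simp add: algebra_simps)
  qed
  show "(\<lambda>n. a n / n) \<longlonglongrightarrow> (SUP n\<in>{1..}. a n / n)"
    unfolding S_def[symmetric]
  proof (rule LIMSEQ_I)
    fix r :: real assume r: "r > 0"
    have "S - r / 2 < S" using r by simp
    then have "\<exists>x\<in>{1..}. S - r / 2 < a x / x"
      using less_cSUP_iff[OF _ bdd, of "S - r / 2"] unfolding S_def by simp
    then obtain m where m: "m \<in> {1..}" "S - r / 2 < a m / m" by blast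
    have m1: "m \<ge> 1" using m by simp
    define A where "A = a m / m"
    have A: "S - r / 2 < A" "A \<le> S" "0 \<le> A" using m up[OF m1] pos[OF m1] by (auto simp: A_def)
    obtain N0 :: nat where N0: "2 * m * S / r < N0" using reals_Archimedean2 by blast
    show "\<exists>no. \<forall>n\<ge>no. norm (a n / real n - S) < r"
    proof (intro exI allI impI)
      fix n assume n: "n \<ge> max m N0 + 1"
      then have n1: "n \<ge> 1" "n \<ge> m" "real n > 2 * m * S / r" using N0 by auto
      define q where "q = (n - 1) div m"
      define s where "s = (n - 1) mod m + 1"
      have ns: "n = q * m + s" using n1 by (simp add: q_def s_def)
      have "(n - 1) mod m < m" using m1 by simp
      then have s1: "s \<ge> 1" "s \<le> m" by (auto simp: s_def)
      have "q * m + m \<ge> n" using ns s1 by simp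
      then have qm: "real q * real m \<ge> real n - real m" by (metis of_nat_add of_nat_le_iff of_nat_mult diff_le_eq)
      have an0: "real q * a m \<le> a n" using mult[OF m1 s1(1), of q] pos[OF s1(1)] ns by simp
      have "(real n - real m) * A \<le> (real q * real m) * A" using qm A(3) by (simp add: mult_right_mono)
      also have "\<dots> = real q * a m" using m1 by (simp add: A_def)
      also have "\<dots> \<le> a n" by (rule an0)
      finally have an: "real n * A - real m * A \<le> a n" by (simp add: algebra_simps)
      have "real m * A \<le> real m * S" using A by (simp add: mult_left_mono)
      moreover have "2 * m * S < r * n" using n1(3) r by (simp add: divide_less_eq mult.commute)
      moreover have "real n * (S - r / 2) < real n * A" using A n1 by simp
      ultimately have "real n * (S - r) < a n" using an by (simp add: algebra_simps)
      then have lo: "S - r < a n / n" using n1 by (simp add: field_simps)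
      have hi: "a n / n \<le> S" using up n1 by simp
      show "norm (a n / real n - S) < r" using lo hi r by simp
    qed
  qed
qed



lemma f0_exists:
  fixes \<beta> :: real
  assumes b: "\<beta> \<ge> 0"
  shows "\<exists>f0. (\<lambda>n. ln (partition_fn n \<beta> 0) / real n) \<longlonglongrightarrow> f0
     \<and> (\<forall>n\<ge>1. partition_fn n \<beta> 0 \<le> exp (f0 * n)) \<and> \<beta> \<le> f0"
proof -
  define a where "a n = ln (partition_fn n \<beta> 0)" for n
  have pos: "0 \<le> a n" if "n \<ge> 1" for n
    using Z_ge1[OF that, of 0 \<beta>] by (simp add: a_def)
  have sup: "a n + a m \<le> a (n + m)" if "n \<ge> 1" "m \<ge> 1" for n m
  proof -
    have p: "0 < partition_fn n \<beta> 0" "0 < partition_fn m \<beta> 0" using Z_pos that by auto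
    have "a n + a m = ln (partition_fn n \<beta> 0 * partition_fn m \<beta> 0)"
      using p by (simp add: a_def ln_mult)
    also have "\<dots> \<le> a (n + m)" unfolding a_def
    proof -
      have q: "0 < partition_fn n \<beta> 0 * partition_fn m \<beta> 0" using p by simp
      show "ln (partition_fn n \<beta> 0 * partition_fn m \<beta> 0) \<le> ln (partition_fn (n + m) \<beta> 0)"
        using Z_super[OF b, of n m] q by (subst ln_le_cancel_iff) auto
    qed
    finally show ?thesis .
  qed
  have bd: "a n \<le> (ln 4 + \<beta>) * n" if "n \<ge> 1" for n
  proof -
    have "partition_fn n \<beta> 0 \<le> (4 * exp \<beta>) ^ n"
      using Z_mono[OF b, of n \<beta>] crude[OF b that] by linarith
    then have "a n \<le> ln ((4 * exp \<beta>) ^ n)" unfolding a_def using Z_pos[OF that] by simp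
    also have "\<dots> = n * (ln 4 + \<beta>)" by (simp add: ln_realpow ln_mult distrib_left)
    finally show ?thesis by (simp add: mult.commute)
  qed
  define f0 where "f0 = (SUP n\<in>{1..}. a n / n)"
  have lim: "(\<lambda>n. a n / n) \<longlonglongrightarrow> f0" unfolding f0_def by (rule fekete(1)[OF pos sup bd])
  have up: "a n / n \<le> f0" if "n \<ge> 1" for n unfolding f0_def by (rule fekete(2)[OF pos sup bd that])
  have Zle: "partition_fn n \<beta> 0 \<le> exp (f0 * n)" if "n \<ge> 1" for n
  proof -
    have "a n \<le> f0 * n" using up[OF that] that by (simp add: divide_le_eq)
    then have "exp (a n) \<le> exp (f0 * n)" by simp
    then show ?thesis using Z_pos[OF that] by (simp add: a_def)
  qed
  have f00: "0 \<le> f0" using up[of 1] pos[of 1] by simp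
  have fb: "\<beta> \<le> f0"
  proof (rule ccontr)
    assume "\<not> \<beta> \<le> f0"
    then have lt: "f0 < \<beta>" by simp
    obtain k :: nat where k: "3 * f0 / (\<beta> - f0) < k" using reals_Archimedean2 by blast
    define k' where "k' = k + 1"
    have k'1: "k' \<ge> 1" by (simp add: k'_def)
    have kk: "3 * f0 / (\<beta> - f0) < k'" using k by (simp add: k'_def)
    have "exp (\<beta> * (real (k' + 1) - 1) * real k') \<le> partition_fn ((k' + 1) * (k' + 1)) \<beta> 0"
      by (rule Z_alt[OF b]) simp
    then have "\<beta> * k' * k' \<le> a ((k' + 1) * (k' + 1))"
      unfolding a_def using Z_pos[of "(k' + 1) * (k' + 1)" \<beta> 0]
      by (simp add: ln_ge_iff algebra_simps)
    also have "\<dots> \<le> f0 * ((k' + 1) * (k' + 1))"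
    proof -
      define M where "M = (k' + 1) * (k' + 1)"
      have M1: "M \<ge> 1" by (simp add: M_def)
      have "a M / real M \<le> f0" by (rule up[OF M1])
      then have "a M \<le> f0 * real M" using M1 by (simp add: pos_divide_le_eq)
      then show ?thesis by (simp add: M_def)
    qed
    finally have "\<beta> * k' * k' \<le> f0 * k' * k' + f0 * (2 * k' + 1)"
      by (simp add: algebra_simps)
    then have "(\<beta> - f0) * k' * k' \<le> f0 * (2 * k' + 1)" by (simp add: algebra_simps)
    also have "\<dots> \<le> f0 * (3 * k')" using f00 k'1 by (intro mult_left_mono) auto
    finally have "((\<beta> - f0) * k') * k' \<le> (3 * f0) * k'" by (simp add: algebra_simps)
    then have "(\<beta> - f0) * k' \<le> 3 * f0" using k'1 by simp
    moreover have "3 * f0 < (\<beta> - f0) * k'" using kk lt by (simp add: divide_less_eq mult.commute)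
    ultimately show False by simp
  qed
  show ?thesis using lim Zle fb unfolding a_def by blast
qed

lemma lin_exp: "e > 0 \<Longrightarrow> real L \<le> exp (e * L) / e"
proof -
  assume e: "e > 0"
  have "e * L \<le> exp (e * L)" using exp_ge_add_one_self[of "e * L"] by linarith
  then show ?thesis using e by (simp add: le_divide_eq mult.commute)
qed



lemma rate_beta:
  fixes \<beta> f0 \<epsilon> :: real
  assumes b: "\<beta> \<ge> 0" and Z0: "\<And>n. n \<ge> 1 \<Longrightarrow> partition_fn n \<beta> 0 \<le> exp (f0 * n)"
    and fb: "\<beta> \<le> f0" and e: "\<epsilon> > 0"
  shows "\<exists>C>0. \<forall>n\<ge>1. partition_fn n \<beta> \<beta> \<le> C * exp ((f0 + \<epsilon>) * n)"
proof -
  define S where "S = {r. \<exists>C>0. \<forall>n\<ge>1. partition_fn n \<beta> \<beta> \<le> C * exp (r * real n)}"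
  have ne: "\<beta> + ln 4 \<in> S"
  proof -
    have "partition_fn n \<beta> \<beta> \<le> 1 * exp ((\<beta> + ln 4) * real n)" if "n \<ge> 1" for n
    proof -
      have "exp ((\<beta> + ln 4) * real n) = exp (\<beta> + ln 4) ^ n"
        by (metis exp_of_nat_mult mult.commute)
      also have "exp (\<beta> + ln 4) = 4 * exp \<beta>" by (simp add: exp_add)
      finally have "exp ((\<beta> + ln 4) * real n) = (4 * exp \<beta>) ^ n" .
      then show ?thesis using crude[OF b that] by simp
    qed
    then show ?thesis unfolding S_def by (intro CollectI exI[of _ 1]) auto
  qed
  have lb: "\<beta> \<le> r" if r: "r \<in> S" for r
  proof (rule ccontr)
    assume "\<not> \<beta> \<le> r"
    then have rb: "r < \<beta>" by simp
    obtain C where C: "C > 0" "\<And>n. n \<ge> 1 \<Longrightarrow> partition_fn n \<beta> \<beta> \<le> C * exp (r * real n)"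
      using r unfolding S_def by auto
    obtain k :: nat where k: "C * exp \<beta> / (\<beta> - r) < k" using reals_Archimedean2 by blast
    define n where "n = k + 1"
    have n1: "n \<ge> 1" by (simp add: n_def)
    have kn0: "C * exp \<beta> < real k * (\<beta> - r)" using k rb by (simp add: divide_less_eq)
    have kn: "C * exp \<beta> < (\<beta> - r) * n" using kn0 rb by (simp add: n_def algebra_simps)
    have "exp (\<beta> * (real n - 1)) \<le> C * exp (r * real n)"
      using Z_ge_single[OF n1, of \<beta> \<beta>] C(2)[OF n1] by linarith
    then have "exp (\<beta> * (real n - 1)) * exp \<beta> * exp (- r * n) \<le> C * exp (r * real n) * exp \<beta> * exp (- r * n)"
      by (simp add: mult_right_mono)
    then have "exp ((\<beta> - r) * n) \<le> C * exp \<beta>"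
      by (simp add: mult.assoc flip: exp_add) (simp add: algebra_simps)
    moreover have "(\<beta> - r) * n < exp ((\<beta> - r) * n)"
      using exp_ge_add_one_self[of "(\<beta> - r) * n"] by linarith
    ultimately show False using kn by linarith
  qed
  have upc: "r' \<in> S" if rS: "r \<in> S" and "r \<le> r'" for r r'
  proof -
    obtain C where C: "C > 0" "\<And>n. n \<ge> 1 \<Longrightarrow> partition_fn n \<beta> \<beta> \<le> C * exp (r * real n)"
      using rS unfolding S_def by auto
    have "partition_fn n \<beta> \<beta> \<le> C * exp (r' * real n)" if "n \<ge> 1" for n
    proof -
      have "C * exp (r * real n) \<le> C * exp (r' * real n)"
        using C(1) \<open>r \<le> r'\<close> by (simp add: mult_right_mono)
      then show ?thesis using C(2)[OF that] by linarith
    qed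
    then show ?thesis using C(1) unfolding S_def by auto
  qed
  have step: "f0 + (\<beta> / r) * (r + e' - f0) \<in> S" if r: "r \<in> S" "r > 0" and e': "e' > 0" for r e'
  proof -
    obtain C where C: "C > 0" "\<And>n. n \<ge> 1 \<Longrightarrow> partition_fn n \<beta> \<beta> \<le> C * exp (r * real n)"
      using r(1) unfolding S_def by auto
    define D where "D = 2 * max 1 C / e'"
    have D0: "D > 0" using e' by (simp add: D_def)
    define t where "t = \<beta> / r"
    have t: "0 \<le> t" "t \<le> 1" "t * r = \<beta>" using lb[OF r(1)] b r(2) by (auto simp: t_def)
    have Zr: "partition_fn L \<beta> r \<le> D * exp ((r + e') * L)" if L: "L \<ge> 1" for L
    proof -
      have "partition_fn L \<beta> r \<le> 2 * real L * max 1 C * exp (max r r * L)"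
        by (rule DB[OF b _ C(1) C(2) L]) (use r(2) in simp)
      also have "\<dots> \<le> 2 * (exp (e' * L) / e') * max 1 C * exp (r * L)"
      proof -
        have P: "0 \<le> max 1 C * exp (r * L)" by simp
        have "2 * real L * (max 1 C * exp (r * L)) \<le> 2 * (exp (e' * L) / e') * (max 1 C * exp (r * L))"
          using lin_exp[OF e', of L] P by (intro mult_right_mono) auto
        then show ?thesis by (simp only: max.idem mult.assoc)
      qed
      also have "\<dots> = D * exp ((r + e') * L)"
        by (simp add: D_def algebra_simps exp_add)
      finally show ?thesis .
    qed
    have "partition_fn n \<beta> \<beta> \<le> D powr t * exp ((f0 + (\<beta> / r) * (r + e' - f0)) * real n)" if n: "n \<ge> 1" for n
    proof -
      have "partition_fn n \<beta> \<beta> = partition_fn n \<beta> (t * r)" using t by simp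
      also have "\<dots> \<le> partition_fn n \<beta> r powr t * partition_fn n \<beta> 0 powr (1 - t)"
        by (rule Z_holder[OF t(1) t(2)])
      also have "\<dots> \<le> (D * exp ((r + e') * n)) powr t * exp (f0 * n) powr (1 - t)"
        using Z_pos[OF n, of \<beta> r] Z_pos[OF n, of \<beta> 0] Zr[OF n] Z0[OF n] t(1,2)
        by (intro mult_mono powr_mono2) auto
      also have "\<dots> = D powr t * exp (t * ((r + e') * n) + (1 - t) * (f0 * n))"
        using D0 by (simp add: powr_mult exp_powr_real exp_add mult.commute)
      also have "t * ((r + e') * n) + (1 - t) * (f0 * n) = (f0 + (\<beta> / r) * (r + e' - f0)) * real n"
        using r(2) by (simp add: t_def field_simps)
      finally show ?thesis .
    qed
    then show ?thesis using D0 unfolding S_def by (intro CollectI exI[of _ "D powr t"]) auto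
  qed
  have bdd: "bdd_below S" using lb by (intro bdd_belowI) auto
  have Sne: "S \<noteq> {}" using ne by auto
  define rs where "rs = Inf S"
  have rs_le: "rs \<le> f0"
  proof (rule ccontr)
    assume "\<not> rs \<le> f0"
    then have gt: "f0 < rs" by simp
    define d where "d = rs - f0"
    define \<rho> where "\<rho> = \<beta> / rs"
    have rs0: "rs > 0" using gt fb b by linarith
    have d0: "d > 0" using gt by (simp add: d_def)
    have \<rho>: "0 \<le> \<rho>" "\<rho> < 1" using b fb gt rs0 by (auto simp: \<rho>_def divide_less_eq)
    define e' where "e' = d * (1 - \<rho>) / 4"
    have e'0: "e' > 0" using d0 \<rho> by (simp add: e'_def)
    have "rs < rs + e'" using e'0 by simp
    then have "\<exists>x\<in>S. x < rs + e'" using cInf_less_iff[OF Sne bdd, of "rs + e'"] unfolding rs_def by simp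
    then obtain r where r: "r \<in> S" "r < rs + e'" by blast
    have rr: "rs \<le> r" unfolding rs_def by (rule cInf_lower[OF r(1) bdd])
    have r0: "r > 0" using rr rs0 by simp
    define v where "v = f0 + (\<beta> / r) * (r + e' - f0)"
    have vS: "v \<in> S" unfolding v_def by (rule step[OF r(1) r0 e'0])
    have "(\<beta> / r) * (r + e' - f0) \<le> \<rho> * (r + e' - f0)"
      unfolding \<rho>_def using rr rs0 b gt e'0 by (intro mult_right_mono divide_left_mono) auto
    also have "\<dots> \<le> \<rho> * (d + 2 * e')"
      using r(2) \<rho>(1) by (intro mult_left_mono) (auto simp: d_def)
    also have "\<dots> < d"
    proof -
      have "d - \<rho> * (d + 2 * e') = d * ((1 - \<rho>) * (2 - \<rho>)) / 2"
        by (simp add: e'_def field_simps)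
      moreover have "d * ((1 - \<rho>) * (2 - \<rho>)) / 2 > 0" using d0 \<rho> by simp
      ultimately show ?thesis by linarith
    qed
    finally have "v < rs" by (simp add: v_def d_def)
    moreover have "rs \<le> v" unfolding rs_def by (rule cInf_lower[OF vS bdd])
    ultimately show False by simp
  qed
  have "rs < f0 + \<epsilon>" using rs_le e by simp
  then have "\<exists>x\<in>S. x < f0 + \<epsilon>" using cInf_less_iff[OF Sne bdd, of "f0 + \<epsilon>"] unfolding rs_def by simp
  then obtain s where s: "s \<in> S" "s < f0 + \<epsilon>" by blast
  have "f0 + \<epsilon> \<in> S" using upc[OF s(1)] s(2) by simp
  then show ?thesis unfolding S_def by auto
qed



theorem proposition2p1:
  fixes \<beta> \<delta> :: real
  assumes "\<beta> \<ge> 0" and "\<delta> \<ge> 0"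
  shows "\<exists>f0 f. (\<lambda>L. ln (partition_fn L \<beta> 0) / real L) \<longlonglongrightarrow> f0
              \<and> (\<lambda>L. ln (partition_fn L \<beta> \<delta>) / real L) \<longlonglongrightarrow> f
              \<and> 0 \<le> f \<and> f = max f0 \<delta>"
proof -
  obtain f0 where lim0: "(\<lambda>n. ln (partition_fn n \<beta> 0) / real n) \<longlonglongrightarrow> f0"
    and Z0: "\<forall>n\<ge>1. partition_fn n \<beta> 0 \<le> exp (f0 * n)" and fb: "\<beta> \<le> f0"
    using f0_exists[OF assms(1)] by blast
  define m where "m = max f0 \<delta>"
  have lim: "(\<lambda>L. ln (partition_fn L \<beta> \<delta>) / real L) \<longlonglongrightarrow> m"
  proof (rule LIMSEQ_I)
    fix r :: real assume r: "r > 0"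
    define e where "e = r / 4"
    have e: "e > 0" using r by (simp add: e_def)
    obtain C where C: "C > 0" "\<forall>n\<ge>1. partition_fn n \<beta> \<beta> \<le> C * exp ((f0 + e) * n)"
      using rate_beta[OF assms(1) _ fb e] Z0 by blast
    define D where "D = 2 * max 1 C / e"
    have D0: "D > 0" using e by (simp add: D_def)
    have up: "ln (partition_fn L \<beta> \<delta>) \<le> ln D + (m + 2 * e) * L" if L: "L \<ge> 1" for L
    proof -
      have "partition_fn L \<beta> \<delta> \<le> 2 * real L * max 1 C * exp (max \<delta> (f0 + e) * L)"
        by (rule DB[OF assms(1) assms(2) C(1) _ L]) (use C(2) in auto)
      also have "\<dots> \<le> 2 * (exp (e * L) / e) * max 1 C * exp ((m + e) * L)"
      proof -
        have "max \<delta> (f0 + e) \<le> m + e" using e by (auto simp: m_def)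
        then have "exp (max \<delta> (f0 + e) * L) \<le> exp ((m + e) * L)"
          by (simp add: mult_right_mono)
        moreover have "real L \<le> exp (e * L) / e" by (rule lin_exp[OF e])
        ultimately have "real L * (max 1 C * exp (max \<delta> (f0 + e) * L)) \<le> (exp (e * L) / e) * (max 1 C * exp ((m + e) * L))"
          by (intro mult_mono) auto
        then show ?thesis by (simp add: mult.assoc)
      qed
      also have "\<dots> = D * exp ((m + 2 * e) * L)"
      proof -
        have ee: "exp (e * L) * exp ((m + e) * L) = exp ((m + 2 * e) * L)"
          by (simp add: algebra_simps flip: exp_add)
        have "2 * (exp (e * L) / e) * max 1 C * exp ((m + e) * L) = D * (exp (e * L) * exp ((m + e) * L))"
          by (simp add: D_def)
        then show ?thesis using ee by simp
      qed
      finally have "partition_fn L \<beta> \<delta> \<le> D * exp ((m + 2 * e) * L)" .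
      then have "ln (partition_fn L \<beta> \<delta>) \<le> ln (D * exp ((m + 2 * e) * L))"
        using Z_pos[OF L] D0 by (subst ln_le_cancel_iff) auto
      also have "\<dots> = ln D + (m + 2 * e) * L" using D0 by (simp add: ln_mult)
      finally show ?thesis .
    qed
    obtain N1 :: nat where N1: "\<bar>ln D\<bar> / e < N1" using reals_Archimedean2 by blast
    obtain N2 where N2: "\<forall>n\<ge>N2. norm (ln (partition_fn n \<beta> 0) / real n - f0) < e"
      using LIMSEQ_D[OF lim0 e] by blast
    obtain N3 :: nat where N3: "\<delta> / e < N3" using reals_Archimedean2 by blast
    show "\<exists>no. \<forall>n\<ge>no. norm (ln (partition_fn n \<beta> \<delta>) / real n - m) < r"
    proof (intro exI allI impI)
      fix n assume n: "n \<ge> max N1 (max N2 N3) + 1"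
      then have n1: "n \<ge> 1" and nN2: "n \<ge> N2" and nN1: "real n > real N1" and nN3: "real n > real N3"
        by auto
      have npos: "real n > 0" using n1 by simp
      have lD0: "\<bar>ln D\<bar> < e * N1" using N1 e by (simp add: divide_less_eq mult.commute)
      have "e * real N1 < e * real n" using nN1 e by simp
      then have lD: "\<bar>ln D\<bar> < e * n" using lD0 by linarith
      have dn0: "\<delta> < e * N3" using N3 e by (simp add: divide_less_eq mult.commute)
      have "e * real N3 < e * real n" using nN3 e by simp
      then have dn: "\<delta> < e * n" using dn0 by linarith
      have hi0: "ln (partition_fn n \<beta> \<delta>) \<le> (m + 3 * e) * n"
        using up[OF n1] lD by (simp add: algebra_simps)
      have hi: "ln (partition_fn n \<beta> \<delta>) / n \<le> m + 3 * e"
        using hi0 npos by (simp add: pos_divide_le_eq)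
      have l0: "ln (partition_fn n \<beta> 0) \<le> ln (partition_fn n \<beta> \<delta>)"
        using Z_mono[OF assms(2), of n \<beta>] Z_pos[OF n1] by (subst ln_le_cancel_iff) auto
      have "ln (partition_fn n \<beta> 0) / n > f0 - e" using N2 nN2 by auto
      then have "ln (partition_fn n \<beta> 0) > (f0 - e) * n" using npos by (simp add: pos_less_divide_eq)
      then have lo1: "ln (partition_fn n \<beta> \<delta>) > (f0 - e) * n" using l0 by simp
      have "ln (exp (\<delta> * (real n - 1))) \<le> ln (partition_fn n \<beta> \<delta>)"
        using Z_ge_single[OF n1, of \<delta> \<beta>] Z_pos[OF n1] by (subst ln_le_cancel_iff) auto
      then have "\<delta> * (real n - 1) \<le> ln (partition_fn n \<beta> \<delta>)" by simp
      then have lo2: "ln (partition_fn n \<beta> \<delta>) > (\<delta> - e) * n" using dn by (simp add: algebra_simps)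
      have "ln (partition_fn n \<beta> \<delta>) > (m - e) * n" using lo1 lo2 by (simp add: m_def max_def)
      then have lo: "ln (partition_fn n \<beta> \<delta>) / n > m - e" using npos by (simp add: pos_less_divide_eq)
      show "norm (ln (partition_fn n \<beta> \<delta>) / real n - m) < r" using hi lo e by (simp add: e_def abs_less_iff)
    qed
  qed
  have "0 \<le> m" using assms(2) by (simp add: m_def)
  then show ?thesis using lim0 lim by (auto simp: m_def)
qed

end
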